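(* Let $d=1$. There is a constant $c_1$ depending only on the dimension such that for all $N\ge1$, $$E_Q\left((Z(N)-1)^2\right)\le\sum_{n=1}^N\left(c_1c^2_{N,1}N^{1/2}\right)^n.$$
   Context: $P^N_0$ is the uniform probability measure on nearest-neighbour walks $\omega:\{0,\dots,N\}\to\mathbb{Z}$ with $\omega(0)=0$, $|\omega(n)-\omega(n-1)|=1$. The environment $h=\{h(n,x):n\in\mathbb{N},x\in\mathbb{Z}\}$ is i.i.d. with $h(n,x)=\pm1$ each with probability $1/2$ on $(H,\mathcal{G},Q)$, independent of the walk; $E_Q$ is expectation under $Q$. $(c_{N,1})$ is a sequence of positive numbers with $\lim_{N\to\infty}c_{N,1}^2N^{1/2}=0$. $Z(N)=\int\prod_{n=1}^N[1+c_{N,1}h(n,\omega(n))]\,dP^N_0(\omega)$. *)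

theory Defs
  imports "HOL-Probability.Probability"
begin

text \<open>Nearest-neighbour walks of length N on Z started at 0. Walks are functions
  nat => int; to obtain a finite set we normalise them to be 0 after time N.\<close>
definition walks :: "nat \<Rightarrow> (nat \<Rightarrow> int) set" where
  "walks N = {\<omega>. \<omega> 0 = 0 \<and> (\<forall>n\<in>{1..N}. \<bar>\<omega> n - \<omega> (n - 1)\<bar> = 1) \<and> (\<forall>n>N. \<omega> n = 0)}"

definition walk_pmf :: "nat \<Rightarrow> (nat \<Rightarrow> int) pmf" where
  "walk_pmf N = pmf_of_set (walks N)"

type_synonym env = "nat \<times> int \<Rightarrow> real"

definition Q :: "env measure" where
  "Q = PiM UNIV (\<lambda>_. measure_pmf (pmf_of_set {-1, 1::real}))"

text \<open>Partition function Z(N) for the coupling sequence c (c N = c_{N,1}).\<close>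
definition Z :: "(nat \<Rightarrow> real) \<Rightarrow> nat \<Rightarrow> env \<Rightarrow> real" where
  "Z c N h = measure_pmf.expectation (walk_pmf N)
               (\<lambda>\<omega>. \<Prod>n=1..N. (1 + c N * h (n, \<omega> n)))"

end

theory Submission
  imports Defs
begin


definition wcons :: "nat \<Rightarrow> int \<Rightarrow> (nat \<Rightarrow> int) \<Rightarrow> (nat \<Rightarrow> int)" where
  "wcons M s \<omega> = (\<lambda>n. if n = 0 then 0 else if n \<le> Suc M then s + \<omega> (n - 1) else 0)"

definition wtail :: "nat \<Rightarrow> (nat \<Rightarrow> int) \<Rightarrow> (nat \<Rightarrow> int)" where
  "wtail M \<omega> = (\<lambda>n. if n \<le> M then \<omega> (Suc n) - \<omega> 1 else 0)"

lemma walks_0: "walks 0 = {\<lambda>_. 0}"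
  by (auto simp: walks_def fun_eq_iff) (metis gr0I)

lemma wcons_in: assumes "\<omega> \<in> walks M" "s \<in> {-1,1}" shows "wcons M s \<omega> \<in> walks (Suc M)"
proof -
  have w: "\<omega> 0 = 0" "\<And>n. n\<in>{1..M} \<Longrightarrow> \<bar>\<omega> n - \<omega> (n - 1)\<bar> = 1" "\<And>n. n > M \<Longrightarrow> \<omega> n = 0"
    using assms(1) by (auto simp: walks_def)
  have "\<bar>wcons M s \<omega> n - wcons M s \<omega> (n - 1)\<bar> = 1" if "n \<in> {1..Suc M}" for n
  proof (cases "n = 1")
    case True then show ?thesis using assms(2) w(1) by (auto simp: wcons_def)
  next
    case False
    then have "n - 1 \<in> {1..M}" using that by auto
    then show ?thesis using w(2)[of "n-1"] that False by (auto simp: wcons_def)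
  qed
  then show ?thesis by (auto simp: walks_def wcons_def)
qed

lemma wtail_in: assumes "\<omega> \<in> walks (Suc M)" shows "wtail M \<omega> \<in> walks M" "\<omega> 1 \<in> {-1,1}"
  "\<omega> = wcons M (\<omega> 1) (wtail M \<omega>)"
proof -
  have w: "\<omega> 0 = 0" "\<And>n. n\<in>{1..Suc M} \<Longrightarrow> \<bar>\<omega> n - \<omega> (n - 1)\<bar> = 1" "\<And>n. n > Suc M \<Longrightarrow> \<omega> n = 0"
    using assms(1) by (auto simp: walks_def)
  show "\<omega> 1 \<in> {-1,1}" using w(2)[of 1] w(1) by auto
  have "\<bar>wtail M \<omega> n - wtail M \<omega> (n - 1)\<bar> = 1" if "n \<in> {1..M}" for n
    using w(2)[of "Suc n"] that by (auto simp: wtail_def)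
  then show "wtail M \<omega> \<in> walks M" by (auto simp: walks_def wtail_def)
  show "\<omega> = wcons M (\<omega> 1) (wtail M \<omega>)"
  proof
    fix n show "\<omega> n = wcons M (\<omega> 1) (wtail M \<omega>) n"
      using w(1) w(3)[of n] by (cases n) (auto simp: wcons_def wtail_def)
  qed
qed

lemma wcons_inj: assumes "\<omega> \<in> walks M" "\<omega>' \<in> walks M" "wcons M s \<omega> = wcons M s' \<omega>'"
  shows "s = s' \<and> \<omega> = \<omega>'"
proof -
  have z: "\<omega> 0 = 0" "\<omega>' 0 = 0" "\<And>n. n > M \<Longrightarrow> \<omega> n = 0" "\<And>n. n > M \<Longrightarrow> \<omega>' n = 0"
    using assms(1,2) by (auto simp: walks_def)
  have "wcons M s \<omega> 1 = wcons M s' \<omega>' 1" using assms(3) by simp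
  then have s: "s = s'" using z by (simp add: wcons_def)
  have "\<omega> n = \<omega>' n" for n
  proof (cases "n \<le> M")
    case True
    have "wcons M s \<omega> (Suc n) = wcons M s' \<omega>' (Suc n)" using assms(3) by simp
    then show ?thesis using True s by (simp add: wcons_def)
  next
    case False then show ?thesis using z by auto
  qed
  then show ?thesis using s by auto
qed

lemma walks_Suc: "walks (Suc M) = (\<lambda>(s,\<omega>). wcons M s \<omega>) ` ({-1,1} \<times> walks M)"
proof
  show "walks (Suc M) \<subseteq> (\<lambda>(s,\<omega>). wcons M s \<omega>) ` ({-1,1} \<times> walks M)"
  proof
    fix \<omega> assume "\<omega> \<in> walks (Suc M)"
    then show "\<omega> \<in> (\<lambda>(s,\<omega>). wcons M s \<omega>) ` ({-1,1} \<times> walks M)"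
      using wtail_in[of \<omega> M] by (intro image_eqI[of _ _ "(\<omega> 1, wtail M \<omega>)"]) auto
  qed
  show "(\<lambda>(s,\<omega>). wcons M s \<omega>) ` ({-1,1} \<times> walks M) \<subseteq> walks (Suc M)"
  proof
    fix x assume "x \<in> (\<lambda>(s,\<omega>). wcons M s \<omega>) ` ({-1,1} \<times> walks M)"
    then obtain p where p: "p \<in> {-1,1} \<times> walks M" "x = (\<lambda>(s,\<omega>). wcons M s \<omega>) p" by (rule imageE)
    have "wcons M (fst p) (snd p) \<in> walks (Suc M)" using p(1) by (intro wcons_in) (auto simp: mem_Times_iff)
    then show "x \<in> walks (Suc M)" using p(2) by (simp add: case_prod_beta)
  qed
qed

lemma walks_inj: "inj_on (\<lambda>(s,\<omega>). wcons M s \<omega>) ({-1,1} \<times> walks M)"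
proof (rule inj_onI)
  fix a b assume "a \<in> {-1,1} \<times> walks M" "b \<in> {-1,1} \<times> walks M"
    "(\<lambda>(s,\<omega>). wcons M s \<omega>) a = (\<lambda>(s,\<omega>). wcons M s \<omega>) b"
  then show "a = b" using wcons_inj[of "snd a" M "snd b" "fst a" "fst b"]
    by (cases a; cases b) simp
qed

lemma walks_fin: "finite (walks M) \<and> card (walks M) = 2 ^ M"
proof (induction M)
  case 0 then show ?case by (simp add: walks_0)
next
  case (Suc M)
  have "card (walks (Suc M)) = card ({-1::int,1} \<times> walks M)"
    unfolding walks_Suc by (rule card_image[OF walks_inj])
  then show ?case using Suc by (simp add: walks_Suc card_cartesian_product)
qed

lemma walks_sum: "(\<Sum>\<omega>\<in>walks (Suc M). f \<omega>) = (\<Sum>s\<in>{-1,1::int}. \<Sum>\<omega>\<in>walks M. f (wcons M s \<omega>))"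
proof -
  have "(\<Sum>\<omega>\<in>walks (Suc M). f \<omega>) = (\<Sum>x\<in>{-1,1::int} \<times> walks M. f (case x of (s,\<omega>) \<Rightarrow> wcons M s \<omega>))"
    unfolding walks_Suc by (subst sum.reindex[OF walks_inj]) (simp add: comp_def)
  also have "\<dots> = (\<Sum>s\<in>{-1,1::int}. \<Sum>\<omega>\<in>walks M. f (wcons M s \<omega>))"
    by (simp add: sum.cartesian_product split_beta)
  finally show ?thesis .
qed

definition avg :: "nat \<Rightarrow> ((nat \<Rightarrow> int) \<Rightarrow> (nat \<Rightarrow> int) \<Rightarrow> real) \<Rightarrow> real" where
  "avg M \<Phi> = (\<Sum>\<omega>\<in>walks M. \<Sum>\<omega>'\<in>walks M. \<Phi> \<omega> \<omega>') / (2 ^ M) ^ 2"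

lemma avg_0: "avg 0 \<Phi> = \<Phi> (\<lambda>_. 0) (\<lambda>_. 0)"
  by (simp add: avg_def walks_0)

lemma avg_Suc: "avg (Suc M) \<Phi> =
  (\<Sum>s\<in>{-1,1::int}. \<Sum>s'\<in>{-1,1::int}. avg M (\<lambda>\<omega> \<omega>'. \<Phi> (wcons M s \<omega>) (wcons M s' \<omega>'))) / 4"
proof -
  have "avg (Suc M) \<Phi> = (\<Sum>s\<in>{-1,1::int}. \<Sum>\<omega>\<in>walks M. \<Sum>s'\<in>{-1,1::int}. \<Sum>\<omega>'\<in>walks M.
       \<Phi> (wcons M s \<omega>) (wcons M s' \<omega>')) / (2 ^ Suc M) ^ 2"
    by (simp add: avg_def walks_sum)
  also have "\<dots> = (\<Sum>s\<in>{-1,1::int}. \<Sum>s'\<in>{-1,1::int}. \<Sum>\<omega>\<in>walks M. \<Sum>\<omega>'\<in>walks M.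
       \<Phi> (wcons M s \<omega>) (wcons M s' \<omega>')) / (2 ^ Suc M) ^ 2"
    by (simp add: sum.swap[of _ "walks M" "{-1,1::int}"])
  also have "\<dots> = (\<Sum>s\<in>{-1,1::int}. \<Sum>s'\<in>{-1,1::int}. avg M (\<lambda>\<omega> \<omega>'. \<Phi> (wcons M s \<omega>) (wcons M s' \<omega>'))) / 4"
    unfolding avg_def sum_divide_distrib[symmetric] by (simp add: power2_eq_square)
  finally show ?thesis .
qed



definition ind :: "bool \<Rightarrow> real" where "ind b = (if b then 1 else 0)"

definition A4 :: "(int \<Rightarrow> real) \<Rightarrow> int \<Rightarrow> real" where
  "A4 F d = (2 * F d + F (d + 2) + F (d - 2)) / 4"

lemma A4_add: "A4 (\<lambda>x. F x + G x) d = A4 F d + A4 G d" by (simp add: A4_def field_simps)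
lemma A4_cmult: "A4 (\<lambda>x. c * F x) d = c * A4 F d" by (simp add: A4_def field_simps)
lemma A4_const: "A4 (\<lambda>x. c) d = c" by (simp add: A4_def)
lemma A4_sum: "finite S \<Longrightarrow> A4 (\<lambda>x. \<Sum>m\<in>S. F m x) d = (\<Sum>m\<in>S. A4 (F m) d)"
  by (induction S rule: finite_induct) (simp_all add: A4_def field_simps)

lemma sum4: "(\<Sum>s\<in>{-1,1::int}. \<Sum>s'\<in>{-1,1::int}. F (d + s - s')) / 4 = A4 F d"
  by (simp add: A4_def algebra_simps)

lemma avg_cmult: "avg M (\<lambda>\<omega> \<omega>'. c * \<Phi> \<omega> \<omega>') = c * avg M \<Phi>"
  by (simp add: avg_def sum_distrib_left)

lemma wcons_at: "1 \<le> n \<Longrightarrow> n \<le> Suc M \<Longrightarrow> wcons M s \<omega> n = s + \<omega> (n - 1)"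
  by (simp add: wcons_def)

definition qf :: "nat \<Rightarrow> int \<Rightarrow> real" where
  "qf m d = avg m (\<lambda>\<omega> \<omega>'. ind (d + \<omega> m - \<omega>' m = 0))"
definition ef :: "nat \<Rightarrow> int \<Rightarrow> real" where
  "ef m d = avg m (\<lambda>\<omega> \<omega>'. real_of_int \<bar>d + \<omega> m - \<omega>' m\<bar>)"
definition sf :: "nat \<Rightarrow> int \<Rightarrow> real" where
  "sf m d = avg m (\<lambda>\<omega> \<omega>'. real_of_int ((d + \<omega> m - \<omega>' m)^2))"
definition Pf :: "real \<Rightarrow> nat \<Rightarrow> int \<Rightarrow> real" where
  "Pf t M d = avg M (\<lambda>\<omega> \<omega>'. \<Prod>n=1..M. (1 + t * ind (d + \<omega> n - \<omega>' n = 0)))"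

lemma qf_0: "qf 0 d = ind (d = 0)" by (simp add: qf_def avg_0)
lemma ef_0: "ef 0 d = \<bar>d\<bar>" by (simp add: ef_def avg_0)
lemma sf_0: "sf 0 d = d^2" by (simp add: sf_def avg_0)
lemma Pf_0: "Pf t 0 d = 1" by (simp add: Pf_def avg_0)

lemma qf_Suc: "qf (Suc m) d = A4 (qf m) d"
proof -
  have "qf (Suc m) d = (\<Sum>s\<in>{-1,1::int}. \<Sum>s'\<in>{-1,1::int}. qf m (d + s - s')) / 4"
    unfolding qf_def avg_Suc by (simp add: wcons_at algebra_simps)
  then show ?thesis by (simp add: A4_def field_simps)
qed

lemma ef_Suc: "ef (Suc m) d = A4 (ef m) d"
proof -
  have "ef (Suc m) d = (\<Sum>s\<in>{-1,1::int}. \<Sum>s'\<in>{-1,1::int}. ef m (d + s - s')) / 4"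
    unfolding ef_def avg_Suc by (simp add: wcons_at algebra_simps)
  then show ?thesis by (simp add: A4_def field_simps)
qed

lemma sf_Suc: "sf (Suc m) d = A4 (sf m) d"
proof -
  have "sf (Suc m) d = (\<Sum>s\<in>{-1,1::int}. \<Sum>s'\<in>{-1,1::int}. sf m (d + s - s')) / 4"
    unfolding sf_def avg_Suc by (simp add: wcons_at algebra_simps)
  then show ?thesis by (simp add: A4_def field_simps)
qed

lemma prod_Suc_split: "(\<Prod>n=1..Suc M. g n) = g 1 * (\<Prod>n=1..M. g (Suc n))"
  by (induction M) (simp_all add: prod.cl_ivl_Suc mult.assoc)

lemma avg_cong: "(\<And>\<omega> \<omega>'. \<omega> \<in> walks M \<Longrightarrow> \<omega>' \<in> walks M \<Longrightarrow> \<Phi> \<omega> \<omega>' = \<Psi> \<omega> \<omega>') \<Longrightarrow> avg M \<Phi> = avg M \<Psi>"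
  unfolding avg_def by (intro arg_cong[where f="\<lambda>x. x / _"] sum.cong refl) auto

lemma Pf_pt: assumes "\<omega> 0 = 0" "\<omega>' 0 = 0"
  shows "(\<Prod>n=1..Suc M. 1 + t * ind (d + wcons M s \<omega> n - wcons M s' \<omega>' n = 0))
    = (1 + t * ind (d + s - s' = 0)) * (\<Prod>n=1..M. 1 + t * ind ((d + s - s') + \<omega> n - \<omega>' n = 0))"
proof -
  have "(\<Prod>n=1..M. 1 + t * ind (d + wcons M s \<omega> (Suc n) - wcons M s' \<omega>' (Suc n) = 0))
     = (\<Prod>n=1..M. 1 + t * ind ((d + s - s') + \<omega> n - \<omega>' n = 0))"
    by (intro prod.cong refl) (simp add: wcons_def algebra_simps)
  moreover have "wcons M s \<omega> 1 = s" "wcons M s' \<omega>' 1 = s'" using assms by (simp_all add: wcons_def)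
  ultimately show ?thesis unfolding prod_Suc_split by simp
qed

lemma Pf_Suc: "Pf t (Suc M) d = A4 (\<lambda>x. (1 + t * ind (x = 0)) * Pf t M x) d"
proof -
  have "Pf t (Suc M) d = (\<Sum>s\<in>{-1,1::int}. \<Sum>s'\<in>{-1,1::int}.
      (1 + t * ind (d + s - s' = 0)) * Pf t M (d + s - s')) / 4"
    unfolding Pf_def avg_Suc
    by (intro arg_cong[where f="\<lambda>x. x / 4"] sum.cong refl, subst avg_cong[OF Pf_pt])
       (auto simp: walks_def avg_cmult)
  then show ?thesis by (simp add: A4_def field_simps)
qed



lemma avg_nonneg: "(\<And>\<omega> \<omega>'. 0 \<le> \<Phi> \<omega> \<omega>') \<Longrightarrow> 0 \<le> avg M \<Phi>"
  unfolding avg_def by (intro divide_nonneg_pos sum_nonneg) auto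

lemma qf_nonneg: "0 \<le> qf m d"
  unfolding qf_def by (rule avg_nonneg) (simp add: ind_def)

lemma sf_closed: "sf M d = real_of_int d ^ 2 + 2 * real M"
proof (induction M arbitrary: d)
  case 0 then show ?case by (simp add: sf_0)
next
  case (Suc M) then show ?case by (simp add: sf_Suc A4_def power2_eq_square field_simps)
qed

lemma conv4: "((2*a + b + c) / 4)^2 \<le> (2*a^2 + b^2 + c^2) / (4::real)"
proof -
  have "0 \<le> 2*(a-b)^2 + 2*(a-c)^2 + (b-c)^2" by simp
  then show ?thesis by (simp add: power2_eq_square field_simps)
qed

lemma ef_sq: "ef M d ^ 2 \<le> sf M d"
proof (induction M arbitrary: d)
  case 0 then show ?case by (simp add: sf_0 ef_0)
next
  case (Suc M)
  have "ef (Suc M) d ^ 2 \<le> (2 * ef M d ^ 2 + ef M (d+2) ^ 2 + ef M (d-2) ^ 2) / 4"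
    unfolding ef_Suc A4_def by (rule conv4)
  also have "\<dots> \<le> (2 * sf M d + sf M (d+2) + sf M (d-2)) / 4"
    using Suc[of d] Suc[of "d+2"] Suc[of "d-2"] by simp
  also have "\<dots> = sf (Suc M) d" by (simp add: sf_Suc A4_def)
  finally show ?case .
qed

lemma abs_even: "even (d::int) \<Longrightarrow> real_of_int (2*\<bar>d\<bar> + \<bar>d+2\<bar> + \<bar>d-2\<bar>) = 4 * \<bar>d\<bar> + 4 * ind (d = 0)"
proof -
  assume "even d"
  then obtain k where k: "d = 2*k" by (auto elim: evenE)
  have "2*\<bar>d\<bar> + \<bar>d+2\<bar> + \<bar>d-2\<bar> = 4 * \<bar>d\<bar> + 4 * (if d = 0 then 1 else 0)"
    unfolding k by (cases "k = 0"; cases "k > 0") auto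
  then have "real_of_int (2*\<bar>d\<bar> + \<bar>d+2\<bar> + \<bar>d-2\<bar>) = real_of_int (4 * \<bar>d\<bar> + 4 * (if d = 0 then 1 else 0))"
    by (rule arg_cong)
  then show ?thesis by (simp add: ind_def)
qed

lemma ef_closed: "even d \<Longrightarrow> ef M d = \<bar>d\<bar> + (\<Sum>n<M. qf n d)"
proof (induction M arbitrary: d)
  case 0 then show ?case by (simp add: ef_0)
next
  case (Suc M)
  have e: "even (d+2)" "even (d-2)" using Suc.prems by auto
  have "ef (Suc M) d = (2*ef M d + ef M (d+2) + ef M (d-2))/4" by (simp add: ef_Suc A4_def)
  also have "\<dots> = real_of_int (2*\<bar>d\<bar> + \<bar>d+2\<bar> + \<bar>d-2\<bar>) / 4
      + (\<Sum>n<M. (2 * qf n d + qf n (d+2) + qf n (d-2)) / 4)"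
    using Suc.IH[OF Suc.prems] Suc.IH[OF e(1)] Suc.IH[OF e(2)]
    by (simp add: sum.distrib sum_divide_distrib[symmetric] sum_distrib_left[symmetric] field_simps)
  also have "\<dots> = \<bar>d\<bar> + ind (d = 0) + (\<Sum>n<M. qf (Suc n) d)"
    using abs_even[OF Suc.prems] by (simp add: qf_Suc A4_def)
  also have "\<dots> = \<bar>d\<bar> + (\<Sum>n<Suc M. qf n d)"
    by (subst sum.lessThan_Suc_shift) (simp add: qf_0)
  finally show ?case by simp
qed

lemma sum_Suc_split: "(\<Sum>n=1..Suc M. g n) = g 1 + (\<Sum>n=1..M. g (Suc n))"
  by (induction M) (simp_all add: sum.cl_ivl_Suc add.assoc)

lemma Pf_ren: "Pf t M d = 1 + t * (\<Sum>m=1..M. Pf t (M - m) 0 * qf m d)"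
proof (induction M arbitrary: d)
  case 0 then show ?case by (simp add: Pf_0)
next
  case (Suc M)
  have eq: "(\<lambda>x. (1 + t * ind (x = 0)) * Pf t M x)
     = (\<lambda>x. 1 + t * (\<Sum>m=1..M. Pf t (M - m) 0 * qf m x) + (t * Pf t M 0) * ind (x = 0))"
  proof
    fix x show "(1 + t * ind (x = 0)) * Pf t M x
      = 1 + t * (\<Sum>m=1..M. Pf t (M - m) 0 * qf m x) + (t * Pf t M 0) * ind (x = 0)"
      using Suc.IH[of x] by (cases "x = 0") (simp_all add: ind_def algebra_simps)
  qed
  have "Pf t (Suc M) d = 1 + t * (\<Sum>m=1..M. Pf t (M - m) 0 * A4 (qf m) d)
      + (t * Pf t M 0) * A4 (\<lambda>x. ind (x = 0)) d"
    unfolding Pf_Suc eq A4_add A4_const A4_cmult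
    by (subst A4_sum, simp, subst A4_cmult, simp)
  also have "\<dots> = 1 + t * (\<Sum>m=1..Suc M. Pf t (Suc M - m) 0 * qf m d)"
    unfolding sum_Suc_split qf_Suc[symmetric]
    by (simp add: qf_Suc qf_0[symmetric] algebra_simps)
  finally show ?case .
qed

definition R :: "nat \<Rightarrow> real" where "R M = (\<Sum>m=1..M. qf m 0)"

lemma R_nonneg: "0 \<le> R M" unfolding R_def by (intro sum_nonneg qf_nonneg)

lemma R_mono: "M' \<le> M \<Longrightarrow> R M' \<le> R M"
  unfolding R_def by (intro sum_mono2 qf_nonneg) auto

lemma geom_step: "(1::real) + x * (\<Sum>k\<le>K. x ^ k) = (\<Sum>k\<le>Suc K. x ^ k)"
  by (subst sum.atMost_Suc_shift) (simp add: sum_distrib_left)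

lemma Pf_bound: assumes t: "0 \<le> t" shows "Pf t M 0 \<le> (\<Sum>k\<le>M. (t * R M) ^ k)"
proof (induction M rule: less_induct)
  case (less M)
  show ?case
  proof (cases M)
    case 0 then show ?thesis by (simp add: Pf_0)
  next
    case (Suc K)
    have tR: "0 \<le> t * R M" using t R_nonneg by simp
    have le: "Pf t (M - m) 0 \<le> (\<Sum>k\<le>K. (t * R M) ^ k)" if m: "m \<in> {1..M}" for m
    proof -
      have "Pf t (M - m) 0 \<le> (\<Sum>k\<le>M - m. (t * R (M - m)) ^ k)"
        using less.IH[of "M - m"] m by auto
      also have "\<dots> \<le> (\<Sum>k\<le>M - m. (t * R M) ^ k)"
        using t R_nonneg R_mono[of "M - m" M]
        by (intro sum_mono power_mono mult_left_mono) auto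
      also have "\<dots> \<le> (\<Sum>k\<le>K. (t * R M) ^ k)"
        using m Suc tR by (intro sum_mono2) auto
      finally show ?thesis .
    qed
    define S where "S = (\<Sum>k\<le>K. (t * R M) ^ k)"
    have le': "Pf t (M - m) 0 \<le> S" if "m \<in> {1..M}" for m using le[OF that] by (simp add: S_def)
    have eqS: "(\<Sum>m=1..M. S * qf m 0) = S * R M"
      by (simp add: R_def sum_distrib_left)
    have "Pf t M 0 = 1 + t * (\<Sum>m=1..M. Pf t (M - m) 0 * qf m 0)" by (rule Pf_ren)
    also have "\<dots> \<le> 1 + t * (\<Sum>m=1..M. S * qf m 0)"
      using t le' qf_nonneg by (intro add_left_mono mult_left_mono sum_mono mult_right_mono) auto
    also have "\<dots> = (\<Sum>k\<le>M. (t * R M) ^ k)" using Suc geom_step[of "t * R M" K] eqS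
      by (simp add: S_def algebra_simps)
    finally show ?thesis .
  qed
qed

lemma R_bound: assumes "1 \<le> N" shows "R N \<le> 2 * sqrt (real N)"
proof -
  have "ef (Suc N) 0 = (\<Sum>n<Suc N. qf n 0)" using ef_closed[of 0 "Suc N"] by simp
  also have "\<dots> = 1 + R N" unfolding R_def
    by (subst sum.lessThan_Suc_shift) (simp add: qf_0 ind_def sum.atLeast1_atMost_eq)
  finally have "(1 + R N)^2 \<le> sf (Suc N) 0" using ef_sq[of "Suc N" 0] by simp
  then have h: "(1 + R N)^2 \<le> 2 * real N + 2" by (simp add: sf_closed)
  define sN where "sN = sqrt (real N)"
  have s1: "1 \<le> sN" using assms by (simp add: sN_def)
  have ss: "sN ^ 2 = real N" by (simp add: sN_def)
  show ?thesis
  proof (rule ccontr)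
    assume "\<not> R N \<le> 2 * sqrt (real N)"
    then have "2 * sN < R N" by (simp add: sN_def)
    then have "(1 + 2 * sN) ^ 2 < (1 + R N) ^ 2" using s1 by (intro power_strict_mono) auto
    moreover have "(1 + 2 * sN) ^ 2 = 1 + 4 * sN + 4 * real N" using ss
      by (simp add: power2_eq_square algebra_simps)
    moreover have "1 \<le> real N" using assms by simp
    ultimately show False using h s1 by linarith
  qed
qed



definition M0 :: "real measure" where "M0 = measure_pmf (pmf_of_set {-1, 1::real})"

lemma Q_eq: "Q = PiM UNIV (\<lambda>_. M0)" by (simp add: Q_def M0_def)

lemma M0_ps: "prob_space M0" by (simp add: M0_def prob_space_measure_pmf)

lemma Q_ps: "prob_space Q" unfolding Q_eq by (rule prob_space_PiM) (simp add: M0_ps)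

lemma M0_id_meas: "(\<lambda>x. x) \<in> borel_measurable M0" by (simp add: M0_def)

lemma compB: assumes "a \<in> K" shows "(\<lambda>f. f a) \<in> borel_measurable (PiM K (\<lambda>_. M0))"
  using measurable_compose[OF measurable_component_singleton[where i=a and I=K and M="\<lambda>_. M0"] M0_id_meas] assms
  by simp

lemma compQ[measurable]: "(\<lambda>h. h a) \<in> borel_measurable Q"
  unfolding Q_eq by (rule compB) simp

lemma Qcomp: "distr Q M0 (\<lambda>h. h a) = M0"
  unfolding Q_eq by (rule distr_PiM_component) (simp_all add: M0_ps)

lemma M0_int: "integrable M0 (f :: real \<Rightarrow> real)"
  unfolding M0_def by (rule integrable_measure_pmf_finite) simp

lemma M0_E1: "(\<integral>x. x \<partial>M0) = 0" by (simp add: M0_def integral_pmf_of_set)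
lemma M0_E2: "(\<integral>x. x^2 \<partial>M0) = 1" by (simp add: M0_def integral_pmf_of_set)

lemma comp_meas_M0: "(\<lambda>h. h a) \<in> measurable Q M0"
  unfolding Q_eq by (rule measurable_component_singleton) simp

lemma Q_fn: fixes f :: "real \<Rightarrow> real"
  shows "integrable Q (\<lambda>h. f (h a))" "(\<integral>h. f (h a) \<partial>Q) = (\<integral>x. f x \<partial>M0)"
proof -
  have fm: "f \<in> borel_measurable M0" by (simp add: M0_def)
  show "integrable Q (\<lambda>h. f (h a))"
    using integrable_distr_eq[OF comp_meas_M0[of a] fm] M0_int[of f] Qcomp[of a] by simp
  show "(\<integral>h. f (h a) \<partial>Q) = (\<integral>x. f x \<partial>M0)"
    using integral_distr[OF comp_meas_M0[of a] fm] Qcomp[of a] by simp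
qed

lemma comp_indep: "prob_space.indep_vars Q (\<lambda>_. M0) (\<lambda>a h. h a) UNIV"
proof -
  interpret Qp: prob_space Q by (rule Q_ps)
  have r: "(\<lambda>x. \<lambda>i\<in>UNIV. x i) = (\<lambda>x. x)" by (simp add: restrict_def)
  have "distr Q (PiM UNIV (\<lambda>_. M0)) (\<lambda>x. \<lambda>i\<in>UNIV. x i) = PiM UNIV (\<lambda>i. distr Q M0 (\<lambda>x. x i))"
    unfolding r Qcomp by (simp add: Q_eq[symmetric] distr_id2)
  then show ?thesis
    by (subst Qp.indep_vars_iff_distr_eq_PiM) (simp_all add: comp_meas_M0)
qed

lemma comp_indepB: "prob_space.indep_vars Q (\<lambda>_. borel) (\<lambda>a h. h a) UNIV"
proof -
  interpret Qp: prob_space Q by (rule Q_ps)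
  show ?thesis using Qp.indep_vars_compose2[OF comp_indep, of "\<lambda>_ x. x" "\<lambda>_. borel"]
    by (simp add: M0_id_meas)
qed

lemma Q_hh: "integrable Q (\<lambda>h. h a * h b)" "(\<integral>h. h a * h b \<partial>Q) = ind (a = b)"
proof -
  interpret Qp: prob_space Q by (rule Q_ps)
  have "integrable Q (\<lambda>h. h a * h b) \<and> (\<integral>h. h a * h b \<partial>Q) = ind (a = b)"
  proof (cases "a = b")
    case True
    then show ?thesis using Q_fn[of "\<lambda>x. x^2" a] M0_E2 by (simp add: ind_def power2_eq_square)
  next
    case False
    have ind2: "Qp.indep_vars (\<lambda>_. borel) (\<lambda>a h. h a) {a, b}"
      by (rule Qp.indep_vars_subset[OF comp_indepB]) simp
    have i1: "\<And>i. i \<in> {a,b} \<Longrightarrow> integrable Q (\<lambda>h. h i)" using Q_fn[of "\<lambda>x. x"] by simp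
    have "(\<integral>h. (\<Prod>i\<in>{a,b}. h i) \<partial>Q) = (\<Prod>i\<in>{a,b}. \<integral>h. h i \<partial>Q)"
      by (rule Qp.indep_vars_lebesgue_integral[OF _ ind2 i1]) simp
    moreover have "integrable Q (\<lambda>h. \<Prod>i\<in>{a,b}. h i)"
      by (rule Qp.indep_vars_integrable[OF _ ind2 i1]) simp
    ultimately show ?thesis using False Q_fn[of "\<lambda>x. x"] M0_E1 by (simp add: ind_def)
  qed
  then show "integrable Q (\<lambda>h. h a * h b)" "(\<integral>h. h a * h b \<partial>Q) = ind (a = b)" by auto
qed

lemma Qint: assumes I: "finite I"
  shows "integrable Q (\<lambda>h. \<Prod>n\<in>I. (1 + \<alpha> * h (n, \<omega> n)) * (1 + \<beta> * h (n, \<omega>' n)))"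
    "(\<integral>h. (\<Prod>n\<in>I. (1 + \<alpha> * h (n, \<omega> n)) * (1 + \<beta> * h (n, \<omega>' n))) \<partial>Q)
       = (\<Prod>n\<in>I. 1 + \<alpha> * \<beta> * ind (\<omega> n = \<omega>' n))"
proof -
  interpret Qp: prob_space Q by (rule Q_ps)
  define X where "X n h = (1 + \<alpha> * h (n, \<omega> n)) * (1 + \<beta> * h (n, \<omega>' n))" for n h
  define Y where "Y n f = (1 + \<alpha> * f (n, \<omega> n)) * (1 + \<beta> * f (n::nat, \<omega>' n::int))" for n f
  have iv: "Qp.indep_vars (\<lambda>j. PiM ({j} \<times> UNIV) (\<lambda>_. M0)) (\<lambda>j h. restrict (\<lambda>i. h i) ({j} \<times> UNIV)) I"
    by (rule Qp.indep_vars_restrict[OF comp_indep]) (auto simp: disjoint_family_on_def)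
  have Ym: "Y j \<in> borel_measurable (PiM ({j} \<times> UNIV) (\<lambda>_. M0))" for j
  proof -
    have "(\<lambda>f. f (j, \<omega> j)) \<in> borel_measurable (PiM ({j} \<times> UNIV) (\<lambda>_. M0))"
         "(\<lambda>f. f (j, \<omega>' j)) \<in> borel_measurable (PiM ({j} \<times> UNIV) (\<lambda>_. M0))"
      by (auto intro: compB)
    then show ?thesis unfolding Y_def by measurable
  qed
  have iv2: "Qp.indep_vars (\<lambda>_. borel) (\<lambda>j h. Y j (restrict (\<lambda>i. h i) ({j} \<times> UNIV))) I"
    by (rule Qp.indep_vars_compose2[OF iv Ym])
  have "(\<lambda>j h. Y j (restrict (\<lambda>i. h i) ({j} \<times> UNIV))) = X"
    by (simp add: fun_eq_iff X_def Y_def)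
  then have ivX: "Qp.indep_vars (\<lambda>_. borel) X I" using iv2 by simp
  have Xe: "X n h = 1 + \<alpha> * h (n, \<omega> n) + \<beta> * h (n, \<omega>' n) + \<alpha> * \<beta> * (h (n, \<omega> n) * h (n, \<omega>' n))" for n h
    by (simp add: X_def algebra_simps)
  have Xi: "integrable Q (X n)" and XI: "(\<integral>h. X n h \<partial>Q) = 1 + \<alpha> * \<beta> * ind (\<omega> n = \<omega>' n)" for n
  proof -
    have a: "integrable Q (\<lambda>h. h (n, \<omega> n))" "integrable Q (\<lambda>h. h (n, \<omega>' n))"
      using Q_fn[of "\<lambda>x. x"] by auto
    have b: "(\<integral>h. h (n, \<omega> n) \<partial>Q) = 0" "(\<integral>h. h (n, \<omega>' n) \<partial>Q) = 0"
      using Q_fn[of "\<lambda>x. x"] M0_E1 by auto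
    show "integrable Q (X n)" unfolding Xe[abs_def] using a Q_hh by auto
    show "(\<integral>h. X n h \<partial>Q) = 1 + \<alpha> * \<beta> * ind (\<omega> n = \<omega>' n)"
      unfolding Xe using a b Q_hh[of "(n, \<omega> n)" "(n, \<omega>' n)"] by (simp add: ind_def Qp.prob_space)
  qed
  show "integrable Q (\<lambda>h. \<Prod>n\<in>I. (1 + \<alpha> * h (n, \<omega> n)) * (1 + \<beta> * h (n, \<omega>' n)))"
    using Qp.indep_vars_integrable[OF I ivX Xi] by (simp add: X_def)
  show "(\<integral>h. (\<Prod>n\<in>I. (1 + \<alpha> * h (n, \<omega> n)) * (1 + \<beta> * h (n, \<omega>' n))) \<partial>Q)
       = (\<Prod>n\<in>I. 1 + \<alpha> * \<beta> * ind (\<omega> n = \<omega>' n))"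
    using Qp.indep_vars_lebesgue_integral[OF I ivX Xi] XI by (simp add: X_def)
qed



lemma walks_ne: "walks N \<noteq> {}" "finite (walks N)" "card (walks N) = 2 ^ N"
  using walks_fin[of N] by auto

lemma Z_expand: "Z c N h = (\<Sum>\<omega>\<in>walks N. \<Prod>n=1..N. (1 + c N * h (n, \<omega> n))) / 2 ^ N"
  unfolding Z_def walk_pmf_def
  by (subst integral_pmf_of_set) (use walks_ne in auto)

lemma F_int: "integrable Q (\<lambda>h. \<Prod>n=1..N. (1 + a * h (n, \<omega> n)))"
  "(\<integral>h. (\<Prod>n=1..N. (1 + a * h (n, \<omega> n))) \<partial>Q) = 1"
  using Qint[where I="{1..N}" and \<alpha>=a and \<beta>=0 and \<omega>=\<omega> and \<omega>'=\<omega>] by simp_all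

lemma EQ: "(\<integral>h. (Z c N h - 1)\<^sup>2 \<partial>Q) = Pf ((c N)^2) N 0 - 1"
proof -
  interpret Qp: prob_space Q by (rule Q_ps)
  define k :: real where "k = 2 ^ N"
  have k0: "k \<noteq> 0" by (simp add: k_def)
  define F where "F (\<omega>::nat\<Rightarrow>int) (h::nat\<times>int\<Rightarrow>real) = (\<Prod>n=1..N. (1 + c N * h (n, \<omega> n)))" for \<omega> h
  define G where "G (\<omega>::nat\<Rightarrow>int) (\<omega>'::nat\<Rightarrow>int) (h::nat\<times>int\<Rightarrow>real) = (\<Prod>n\<in>{1..N}. (1 + c N * h (n, \<omega> n)) * (1 + c N * h (n, \<omega>' n)))" for \<omega> \<omega>' h
  have GF: "G \<omega> \<omega>' h = F \<omega> h * F \<omega>' h" for \<omega> \<omega>' h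
    by (simp add: G_def F_def prod.distrib)
  have cardW: "(\<Sum>\<omega>\<in>walks N. (1::real)) = k" using walks_ne by (simp add: k_def)
  have pt: "(Z c N h - 1)\<^sup>2 = (\<Sum>\<omega>\<in>walks N. \<Sum>\<omega>'\<in>walks N. G \<omega> \<omega>' h - F \<omega> h - F \<omega>' h + 1) / k^2" for h
  proof -
    have "Z c N h - 1 = (\<Sum>\<omega>\<in>walks N. F \<omega> h - 1) / k"
      unfolding Z_expand sum_subtractf cardW using k0 by (simp add: F_def k_def field_simps)
    then have "(Z c N h - 1)\<^sup>2 = ((\<Sum>\<omega>\<in>walks N. F \<omega> h - 1) * (\<Sum>\<omega>'\<in>walks N. F \<omega>' h - 1)) / k^2"
      by (simp add: power2_eq_square)
    also have "\<dots> = (\<Sum>\<omega>\<in>walks N. \<Sum>\<omega>'\<in>walks N. (F \<omega> h - 1) * (F \<omega>' h - 1)) / k^2"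
      by (simp add: sum_product)
    also have "\<dots> = (\<Sum>\<omega>\<in>walks N. \<Sum>\<omega>'\<in>walks N. G \<omega> \<omega>' h - F \<omega> h - F \<omega>' h + 1) / k^2"
      by (simp add: GF algebra_simps)
    finally show ?thesis .
  qed
  have Fi: "integrable Q (F \<omega>)" "(\<integral>h. F \<omega> h \<partial>Q) = 1" for \<omega>
    using F_int[where N=N and a="c N" and \<omega>=\<omega>] by (simp_all add: F_def[abs_def])
  have Gi: "integrable Q (G \<omega> \<omega>')" "(\<integral>h. G \<omega> \<omega>' h \<partial>Q) = (\<Prod>n\<in>{1..N}. 1 + (c N)^2 * ind (\<omega> n = \<omega>' n))" for \<omega> \<omega>'
    using Qint[where I="{1..N}" and \<alpha>="c N" and \<beta>="c N" and \<omega>=\<omega> and \<omega>'=\<omega>'] by (simp_all add: G_def[abs_def] power2_eq_square)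
  have Ti: "integrable Q (\<lambda>h. G \<omega> \<omega>' h - F \<omega> h - F \<omega>' h + 1)" for \<omega> \<omega>'
    using Fi Gi by auto
  have TI: "(\<integral>h. G \<omega> \<omega>' h - F \<omega> h - F \<omega>' h + 1 \<partial>Q) = (\<Prod>n\<in>{1..N}. 1 + (c N)^2 * ind (\<omega> n = \<omega>' n)) - 1" for \<omega> \<omega>'
    using Fi Gi by (simp add: Qp.prob_space)
  have "(\<integral>h. (Z c N h - 1)\<^sup>2 \<partial>Q) = (\<integral>h. (\<Sum>\<omega>\<in>walks N. \<Sum>\<omega>'\<in>walks N. G \<omega> \<omega>' h - F \<omega> h - F \<omega>' h + 1) \<partial>Q) / k^2"
    unfolding pt by simp
  also have "\<dots> = (\<Sum>\<omega>\<in>walks N. \<Sum>\<omega>'\<in>walks N. (\<Prod>n\<in>{1..N}. 1 + (c N)^2 * ind (\<omega> n = \<omega>' n)) - 1) / k^2"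
    using Ti by (simp add: integral_sum TI)
  also have "\<dots> = (\<Sum>\<omega>\<in>walks N. \<Sum>\<omega>'\<in>walks N. (\<Prod>n\<in>{1..N}. 1 + (c N)^2 * ind (\<omega> n = \<omega>' n))) / k^2 - 1"
    using k0 cardW by (simp add: sum_subtractf field_simps power2_eq_square)
  also have "\<dots> = Pf ((c N)^2) N 0 - 1"
    by (simp add: Pf_def avg_def k_def)
  finally show ?thesis .
qed

theorem lemma12:
  shows "\<exists>c1::real. \<forall>c::nat \<Rightarrow> real.
           (\<forall>N. c N > 0) \<longrightarrow> ((\<lambda>N. (c N)\<^sup>2 * sqrt (real N)) \<longlonglongrightarrow> 0) \<longrightarrow>
           (\<forall>N\<ge>1. (\<integral>h. (Z c N h - 1)\<^sup>2 \<partial>Q)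
                     \<le> (\<Sum>n=1..N. (c1 * (c N)\<^sup>2 * sqrt (real N)) ^ n))"
proof (intro exI[of _ 2] allI impI)
  fix c :: "nat \<Rightarrow> real" and N :: nat
  assume N: "1 \<le> N"
  define t where "t = (c N)^2"
  have t0: "0 \<le> t" by (simp add: t_def)
  have "(\<integral>h. (Z c N h - 1)\<^sup>2 \<partial>Q) = Pf t N 0 - 1" by (simp add: EQ t_def)
  also have "\<dots> \<le> (\<Sum>k\<le>N. (t * R N) ^ k) - 1" using Pf_bound[OF t0, of N] by simp
  also have "\<dots> = (\<Sum>k=1..N. (t * R N) ^ k)"
    by (simp add: sum.atMost_shift sum.atLeast1_atMost_eq)
  also have "\<dots> \<le> (\<Sum>k=1..N. (2 * (c N)\<^sup>2 * sqrt (real N)) ^ k)"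
  proof (intro sum_mono power_mono)
    have "t * R N \<le> t * (2 * sqrt (real N))" by (rule mult_left_mono[OF R_bound[OF N] t0])
    moreover have "t * (2 * sqrt (real N)) = 2 * (c N)\<^sup>2 * sqrt (real N)" by (simp add: t_def)
    ultimately show "t * R N \<le> 2 * (c N)\<^sup>2 * sqrt (real N)" by linarith
    show "0 \<le> t * R N" using t0 R_nonneg[of N] by simp
  qed
  finally show "(\<integral>h. (Z c N h - 1)\<^sup>2 \<partial>Q) \<le> (\<Sum>n=1..N. (2 * (c N)\<^sup>2 * sqrt (real N)) ^ n)" .
qed

end
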